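(* Let $(X,d)$ be a geodesic metric space such that the kernel $\exp(-\lambda\, d^2(x,y))$ is positive definite on $X$ for all $\lambda>0$. Then $X$ is contractible, and hence simply connected.
   Context: A geodesic metric space is a metric space in which any two points $x,y$ are joined by a path $\gamma\colon[0,L]\to X$ with $\gamma(0)=x$, $\gamma(L)=y$ and $d(\gamma(t),\gamma(t'))=|t-t'|$ for all $t,t'$. A positive definite kernel on $X$ (with its metric topology) is a continuous $k\colon X\times X\to\mathbb{R}$ with $\sum_{i,j}c_ic_jk(x_i,x_j)\ge0$ for all $n$, $x_1,\dots,x_n\in X$, $c_1,\dots,c_n\in\mathbb{R}$. *)

theory Defs
  imports "HOL-Analysis.Analysis"
begin

definition geodesic_space :: "'a::metric_space itself \<Rightarrow> bool" where
  "geodesic_space _ \<longleftrightarrow>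
     (\<forall>x y::'a. \<exists>L::real. \<exists>\<gamma>::real \<Rightarrow> 'a.
        L \<ge> 0 \<and> \<gamma> 0 = x \<and> \<gamma> L = y \<and>
        (\<forall>t\<in>{0..L}. \<forall>t'\<in>{0..L}. dist (\<gamma> t) (\<gamma> t') = \<bar>t - t'\<bar>))"

definition pos_def_kernel :: "('a::metric_space \<Rightarrow> 'a \<Rightarrow> real) \<Rightarrow> bool" where
  "pos_def_kernel k \<longleftrightarrow>
     continuous_on UNIV (\<lambda>p. k (fst p) (snd p)) \<and>
     (\<forall>(n::nat) (x::nat \<Rightarrow> 'a) (c::nat \<Rightarrow> real).
        (\<Sum>i<n. \<Sum>j<n. c i * c j * k (x i) (x j)) \<ge> 0)"

end

theory Submission imports Defs begin

lemma cnd: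
  fixes x :: "nat \<Rightarrow> 'a::metric_space" and c :: "nat \<Rightarrow> real"
  assumes K: "\<And>l::real. l > 0 \<Longrightarrow> pos_def_kernel (\<lambda>x y::'a. exp (- l * (dist x y)\<^sup>2))"
    and s: "(\<Sum>i<n. c i) = 0"
  shows "(\<Sum>i<n. \<Sum>j<n. c i * c j * (dist (x i) (x j))\<^sup>2) \<le> 0"
proof -
  let ?F = "\<lambda>l. \<Sum>i<n. \<Sum>j<n. c i * c j * ((exp (- l * (dist (x i) (x j))\<^sup>2) - 1) / l)"
  have lim: "(?F \<longlongrightarrow> (\<Sum>i<n. \<Sum>j<n. c i * c j * (- (dist (x i) (x j))\<^sup>2))) (at_right 0)"
  proof (intro tendsto_intros)
    fix i j
    have "((\<lambda>l. exp (- l * a)) has_real_derivative (- a)) (at 0)" for a :: real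
      by (auto intro!: derivative_eq_intros)
    then have "((\<lambda>l. (exp (- l * a) - exp (- 0 * a)) / (l - 0)) \<longlongrightarrow> - a) (at 0)" for a :: real
      unfolding DERIV_def[symmetric] has_field_derivative_iff by simp
    then have "((\<lambda>l. (exp (- l * a) - 1) / l) \<longlongrightarrow> - a) (at 0)" for a :: real
      by simp
    from tendsto_mono[OF at_le[OF subset_UNIV] this]
    show "((\<lambda>l. (exp (- l * (dist (x i) (x j))\<^sup>2) - 1) / l) \<longlongrightarrow> - (dist (x i) (x j))\<^sup>2) (at_right 0)"
      .
  qed
  have "eventually (\<lambda>l. ?F l \<ge> 0) (at_right 0)"
  proof (rule eventually_mono[OF eventually_at_right_less])
    fix l :: real assume l: "0 < l"
    have A: "(\<Sum>i<n. \<Sum>j<n. c i * c j * exp (- l * (dist (x i) (x j))\<^sup>2)) \<ge> 0"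
      using K[OF l] unfolding pos_def_kernel_def by blast
    have B: "(\<Sum>i<n. \<Sum>j<n. c i * c j) = 0"
      using s by (simp add: sum_product[symmetric])
    have "?F l = ((\<Sum>i<n. \<Sum>j<n. c i * c j * exp (- l * (dist (x i) (x j))\<^sup>2)) - (\<Sum>i<n. \<Sum>j<n. c i * c j)) / l"
      by (simp add: sum_divide_distrib sum_subtractf[symmetric] algebra_simps diff_divide_distrib)
    then show "?F l \<ge> 0" using A B l by simp
  qed
  have "0 \<le> (\<Sum>i<n. \<Sum>j<n. c i * c j * (- (dist (x i) (x j))\<^sup>2))"
    by (rule tendsto_lowerbound[OF lim]) (use \<open>eventually _ _\<close> in auto)
  then show ?thesis by (simp add: sum_negf)
qed
lemma quad_zero:
  fixes a b :: real
  assumes "\<And>e. a * e + b * e\<^sup>2 \<le> 0"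
  shows "a = 0"
proof (rule ccontr)
  assume a: "a \<noteq> 0"
  define e where "e = a / (2 * (\<bar>b\<bar> + 1))"
  have pos: "2 * (\<bar>b\<bar> + 1) > 0" by simp
  have "a * e + b * e\<^sup>2 = e\<^sup>2 * (2 * (\<bar>b\<bar> + 1) + b)"
  proof -
    have "e * (2 * (\<bar>b\<bar> + 1)) = a" unfolding e_def using pos by simp
    then show ?thesis by (metis (no_types, lifting) distrib_left mult.assoc mult.commute power2_eq_square)
  qed
  moreover have "e\<^sup>2 > 0" using a pos unfolding e_def by simp
  moreover have "2 * (\<bar>b\<bar> + 1) + b > 0" by (cases "b \<ge> 0") auto
  ultimately have "a * e + b * e\<^sup>2 > 0" by simp
  with assms[of e] show False by simp
qed

lemma interp:
  fixes x y m z :: "'a::metric_space"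
  assumes K: "\<And>l::real. l > 0 \<Longrightarrow> pos_def_kernel (\<lambda>x y::'a. exp (- l * (dist x y)\<^sup>2))"
    and xm: "dist x m = s * dist x y" and my: "dist m y = (1 - s) * dist x y"
  shows "(dist z m)\<^sup>2 = (1 - s) * (dist z x)\<^sup>2 + s * (dist z y)\<^sup>2 - s * (1 - s) * (dist x y)\<^sup>2"
proof -
  define D A B C where "D = dist x y" "A = dist z x" "B = dist z y" "C = dist z m"
  have S: "2 * ((1 - s) * A\<^sup>2 + s * B\<^sup>2 - C\<^sup>2 - s * (1 - s) * D\<^sup>2) * e + (- 2 * C\<^sup>2) * e\<^sup>2 \<le> 0" for e
  proof -
    define p :: "nat \<Rightarrow> 'a" where "p i = (if i = 0 then x else if i = 1 then y else if i = 2 then m else z)" for i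
    define c :: "nat \<Rightarrow> real" where "c i = (if i = 0 then 1 - s else if i = 1 then s else if i = 2 then - 1 - e else e)" for i
    have "(\<Sum>i<4. c i) = 0" by (simp add: c_def eval_nat_numeral)
    from cnd[OF K this, of p]
    have "(\<Sum>i<4. \<Sum>j<4. c i * c j * (dist (p i) (p j))\<^sup>2) \<le> 0" .
    also have "(\<Sum>i<4. \<Sum>j<4. c i * c j * (dist (p i) (p j))\<^sup>2) =
       2 * ((1 - s) * s * D\<^sup>2 + (1 - s) * (- 1 - e) * (s * D)\<^sup>2 + s * (- 1 - e) * ((1 - s) * D)\<^sup>2
            + (1 - s) * e * A\<^sup>2 + s * e * B\<^sup>2 + (- 1 - e) * e * C\<^sup>2)"
    proof -
      have d: "dist y x = D" "dist m x = s * D" "dist y m = (1 - s) * D" "dist x z = A" "dist y z = B" "dist m z = C"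
        "dist x y = D" "dist x m = s * D" "dist m y = (1 - s) * D" "dist z x = A" "dist z y = B" "dist z m = C"
        using xm my by (simp_all add: D_A_B_C_def dist_commute)
      show ?thesis
        by (simp add: eval_nat_numeral p_def c_def d)
    qed
    also have "\<dots> = 2 * ((1 - s) * A\<^sup>2 + s * B\<^sup>2 - C\<^sup>2 - s * (1 - s) * D\<^sup>2) * e + (- 2 * C\<^sup>2) * e\<^sup>2"
      by (simp add: algebra_simps power2_eq_square)
    finally show ?thesis .
  qed
  have "2 * ((1 - s) * A\<^sup>2 + s * B\<^sup>2 - C\<^sup>2 - s * (1 - s) * D\<^sup>2) = 0"
    by (rule quad_zero[OF S])
  then show ?thesis unfolding D_A_B_C_def by simp
qed

theorem mainTheorem6:
  assumes "geodesic_space TYPE('a::metric_space)"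
    and "\<And>l::real. l > 0 \<Longrightarrow>
           pos_def_kernel (\<lambda>x y::'a. exp (- l * (dist x y)\<^sup>2))"
  shows "contractible (UNIV::'a set) \<and> simply_connected (UNIV::'a set)"
proof -
  note K = assms(2)
  define p :: 'a where "p = undefined"
  have "\<forall>x. \<exists>L::real. \<exists>\<gamma>::real \<Rightarrow> 'a. L \<ge> 0 \<and> \<gamma> 0 = p \<and> \<gamma> L = x \<and>
        (\<forall>t\<in>{0..L}. \<forall>t'\<in>{0..L}. dist (\<gamma> t) (\<gamma> t') = \<bar>t - t'\<bar>)"
    using assms(1) unfolding geodesic_space_def by blast
  then obtain L :: "'a \<Rightarrow> real" and \<gamma> :: "'a \<Rightarrow> real \<Rightarrow> 'a" where
    G: "\<And>x. L x \<ge> 0" "\<And>x. \<gamma> x 0 = p" "\<And>x. \<gamma> x (L x) = x"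
       "\<And>x t t'. t \<in> {0..L x} \<Longrightarrow> t' \<in> {0..L x} \<Longrightarrow> dist (\<gamma> x t) (\<gamma> x t') = \<bar>t - t'\<bar>"
    by metis
  define H where "H t x = \<gamma> x (t * L x)" for t x
  have Lx: "dist p x = L x" for x
    using G(4)[of 0 x "L x"] G(1)[of x] G(2,3) by simp
  have mem: "t * L x \<in> {0..L x}" if "t \<in> {0..1}" for t x
    using that G(1)[of x] by (auto simp: mult_le_cancel_right1 mult_left_le_one_le)
  have Hts: "dist (H t x) (H s x) = \<bar>t - s\<bar> * L x" if "t \<in> {0..1}" "s \<in> {0..1}" for t s x
    using G(4)[OF mem[OF that(1)] mem[OF that(2)]] G(1)[of x]
    by (simp add: H_def left_diff_distrib[symmetric] abs_mult)
  have H0: "H 0 x = p" for x by (simp add: H_def G)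
  have H1: "H 1 x = x" for x by (simp add: H_def G)
  have Hp: "dist p (H t x) = t * dist p x" if "t \<in> {0..1}" for t x
    using Hts[OF _ that, of 0 x] that by (simp add: H0 Lx)
  have Hx: "dist (H t x) x = (1 - t) * dist p x" if "t \<in> {0..1}" for t x
    using Hts[OF that, of 1 x] that by (simp add: H1 Lx)
  have key: "dist (H t x) (H t y) = t * dist x y" if t: "t \<in> {0..1}" for t x y
  proof -
    have e1: "(dist (H t x) (H t y))\<^sup>2 = (1 - t) * (dist (H t x) p)\<^sup>2 + t * (dist (H t x) y)\<^sup>2 - t * (1 - t) * (dist p y)\<^sup>2"
      by (rule interp[OF K Hp[OF t] Hx[OF t]])
    have e2: "(dist y (H t x))\<^sup>2 = (1 - t) * (dist y p)\<^sup>2 + t * (dist y x)\<^sup>2 - t * (1 - t) * (dist p x)\<^sup>2"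
      by (rule interp[OF K Hp[OF t] Hx[OF t]])
    have "(dist (H t x) (H t y))\<^sup>2 = (t * dist x y)\<^sup>2"
      using e1[unfolded dist_commute[of "H t x" y] e2 dist_commute[of "H t x" p] Hp[OF t]]
      by (simp add: dist_commute[of y] dist_commute[of y p] power_mult_distrib algebra_simps power2_eq_square)
    then show ?thesis using t by (simp add: power2_eq_iff_nonneg)
  qed
  have cont: "continuous_on ({0..1} \<times> UNIV) (\<lambda>z. H (fst z) (snd z))"
    unfolding continuous_on_iff
  proof (intro ballI allI impI)
    fix z e assume z: "z \<in> {0..1::real} \<times> (UNIV::'a set)" and e: "(0::real) < e"
    obtain t0 x0 where z0: "z = (t0, x0)" by fastforce
    define d where "d = e / (1 + L x0)"
    have Lpos: "1 + L x0 > 0" using G(1)[of x0] by simp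
    have "d > 0" using e Lpos by (simp add: d_def)
    moreover have "dist (H (fst z') (snd z')) (H (fst z) (snd z)) < e"
      if z': "z' \<in> {0..1} \<times> UNIV" "dist z' z < d" for z'
    proof -
      obtain t x where z1: "z' = (t, x)" by fastforce
      have t: "t \<in> {0..1}" and t0: "t0 \<in> {0..1}" using z z' z0 z1 by auto
      have dx: "dist x x0 \<le> dist z' z" using dist_snd_le[of z' z] z0 z1 by simp
      have dt: "\<bar>t - t0\<bar> \<le> dist z' z" using dist_fst_le[of z' z] z0 z1 by (simp add: dist_real_def)
      have "dist (H t x) (H t0 x0) \<le> dist (H t x) (H t x0) + dist (H t x0) (H t0 x0)"
        by (rule dist_triangle)
      also have "\<dots> = t * dist x x0 + \<bar>t - t0\<bar> * L x0" using key[OF t] Hts[OF t t0] by simp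
      also have "\<dots> \<le> dist z' z + dist z' z * L x0"
        using t dx dt G(1)[of x0] mult_left_le_one_le[of "dist x x0" t]
        by (intro add_mono mult_right_mono) auto
      also have "\<dots> = dist z' z * (1 + L x0)" by (simp add: algebra_simps)
      also have "\<dots> < d * (1 + L x0)" using z'(2) Lpos by simp
      also have "\<dots> = e" using Lpos by (simp add: d_def)
      finally show ?thesis using z0 z1 by simp
    qed
    ultimately show "\<exists>d>0. \<forall>z'\<in>{0..1} \<times> UNIV. dist z' z < d \<longrightarrow> dist (H (fst z') (snd z')) (H (fst z) (snd z)) < e"
      by blast
  qed
  have c1: "continuous_on ({0..1} \<times> UNIV) (\<lambda>z::real\<times>'a. H (1 - fst z) (snd z))"
    using continuous_on_compose2[OF cont, of "{0..1} \<times> UNIV" "\<lambda>z::real\<times>'a. (1 - fst z, snd z)"]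
    by (force intro: continuous_intros)
  have c2: "prod_topology (top_of_set {0..1::real}) (euclidean::'a topology) = top_of_set ({0..1} \<times> UNIV)"
    using subtopology_Times[of euclidean euclidean "{0..1::real}" "UNIV::'a set"] by simp
  have C: "contractible (UNIV::'a set)"
    unfolding contractible_def
    apply (rule exI[of _ p])
    apply (simp add: homotopic_with)
    apply (rule exI[of _ "\<lambda>z. H (1 - fst z) (snd z)"])
    using c1 c2 H0 H1 by simp
  have loop: "homotopic_loops UNIV a (\<lambda>_. p)" if a: "path a" "pathfinish a = pathstart a" for a :: "real \<Rightarrow> 'a"
    unfolding homotopic_loops
  proof (intro exI[of _ "\<lambda>z. H (1 - fst z) (a (snd z))"] conjI ballI)
    have ca: "continuous_on {0..1} a" using a(1) unfolding path_def .
    have "continuous_on ({0..1} \<times> {0..1}) (\<lambda>z::real\<times>real. a (snd z))"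
      by (rule continuous_on_compose2[OF ca continuous_on_snd]) auto
    then have c3: "continuous_on ({0..1} \<times> {0..1}) (\<lambda>z::real\<times>real. (1 - fst z, a (snd z)))"
      by (intro continuous_on_Pair continuous_intros)
    have i3: "(\<lambda>z::real\<times>real. (1 - fst z, a (snd z))) ` ({0..1} \<times> {0..1}) \<subseteq> {0..1} \<times> UNIV"
      by auto
    show "continuous_on ({0..1} \<times> {0..1}) (\<lambda>z. H (1 - fst z) (a (snd z)))"
      using continuous_on_compose2[OF cont c3 i3] by simp
  next
    show "(\<lambda>z. H (1 - fst z) (a (snd z))) \<in> {0..1} \<times> {0..1} \<rightarrow> UNIV" by simp
  next
    fix x :: real show "H (1 - fst (0::real, x)) (a (snd (0::real, x))) = a x" by (simp add: H1)
  next
    fix x :: real show "H (1 - fst (1::real, x)) (a (snd (1::real, x))) = p" by (simp add: H0)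
  next
    fix t :: real
    show "pathfinish ((\<lambda>z. H (1 - fst z) (a (snd z))) \<circ> Pair t) = pathstart ((\<lambda>z. H (1 - fst z) (a (snd z))) \<circ> Pair t)"
      using a(2) by (simp add: pathfinish_def pathstart_def)
  qed
  have "simply_connected (UNIV::'a set)"
    unfolding simply_connected_def
      proof (intro allI impI)
    fix a b :: "real \<Rightarrow> 'a"
    assume "path a \<and> pathfinish a = pathstart a \<and> path_image a \<subseteq> UNIV \<and> path b \<and> pathfinish b = pathstart b \<and> path_image b \<subseteq> UNIV"
    then have "homotopic_loops UNIV a (\<lambda>_. p)" "homotopic_loops UNIV b (\<lambda>_. p)" using loop by auto
    then show "homotopic_loops UNIV a b" by (rule homotopic_loops_trans[OF _ homotopic_loops_sym])
  qed
  with C show ?thesis by blast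
qed
end
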